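(* Let $X$ be a normed space and let $Y$ be a topological vector space ordered by a closed convex pointed cone $K$. Let $\alpha:\mathbb{R}_+\to\mathbb{R}_+$ be nondecreasing with $\lim_{t\to0^+}\alpha(t)/t=0$. Let $A\subset X$ be convex, $k_0\in K\setminus\{0\}$, and let $F:X\to Y$ be strongly $\alpha(\cdot)$-$k_0$ paraconvex on $A$ with constant $C\ge0$. Let $x_0\in A$ and $h\in X$ with $\|h\|=1$ be such that there is $\delta_0>0$ with $x_0+th\in A$ for all $t\in(-\delta_0,\delta_0)$. Define, for $0<t<\delta_0$, $$\phi(t):=\frac{F(x_0+th)-F(x_0)}{t}+C\,\frac{\alpha(t)}{t}\,k_0.$$ Then there exist $b\in Y$ and $\delta>0$ such that $\phi(t)-b\in K$ for all $0<t<\delta$.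
   Context: A cone $K$ is pointed if $K\cap(-K)=\{0\}$. For a convex cone $K\subset Y$, write $x\le_K y$ iff $y-x\in K$. A mapping $F:X\to Y$ is strongly $\alpha(\cdot)$-$k_0$ paraconvex on a convex set $A\subset X$ with constant $C\ge0$ (where $k_0\in K$) if for all $x_1,x_2\in A$ and all $\lambda\in[0,1]$, $$F(\lambda x_1+(1-\lambda)x_2)\le_K \lambda F(x_1)+(1-\lambda)F(x_2)+C\min\{\lambda,1-\lambda\}\,\alpha(\|x_1-x_2\|)\,k_0.$$ *)

theory Defs
  imports "HOL-Analysis.Analysis"
begin

text \<open>Real topological vector spaces: vector addition and scalar multiplication are
  jointly continuous (no separation axiom assumed).\<close>
class topological_real_vector = real_vector + topological_monoid_add +
  assumes tendsto_scaleR_Pair_tvs: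
    "LIM x (nhds (c::real) \<times>\<^sub>F nhds a). fst x *\<^sub>R snd x :> nhds (c *\<^sub>R a)"

definition pointed_cone :: "'a::real_vector set \<Rightarrow> bool" where
  "pointed_cone K \<longleftrightarrow> K \<inter> uminus ` K = {0}"

definition cone_le :: "'a::real_vector set \<Rightarrow> 'a \<Rightarrow> 'a \<Rightarrow> bool" where
  "cone_le K x y \<longleftrightarrow> y - x \<in> K"

definition strongly_paraconvex ::
  "('a::real_normed_vector \<Rightarrow> 'b::real_vector) \<Rightarrow> 'b set \<Rightarrow> (real \<Rightarrow> real) \<Rightarrow> 'b \<Rightarrow> real \<Rightarrow> 'a set \<Rightarrow> bool"
where
  "strongly_paraconvex F K \<alpha> k0 C A \<longleftrightarrow>
     (\<forall>x1\<in>A. \<forall>x2\<in>A. \<forall>l\<in>{0..1}.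
        cone_le K (F (l *\<^sub>R x1 + (1 - l) *\<^sub>R x2))
          (l *\<^sub>R F x1 + (1 - l) *\<^sub>R F x2 + (C * min l (1 - l) * \<alpha> (norm (x1 - x2))) *\<^sub>R k0))"

end

theory Submission
  imports Defs
begin

lemma cone_add: assumes "convex K" "cone K" "x \<in> K" "y \<in> K" shows "x + y \<in> K"
proof -
  have "(1/2) *\<^sub>R x + (1/2) *\<^sub>R y \<in> K" using assms convexD[of K x y "1/2" "1/2"] by auto
  hence "2 *\<^sub>R ((1/2) *\<^sub>R x + (1/2) *\<^sub>R y) \<in> K" using assms(2) unfolding cone_def by auto
  thus ?thesis by (simp add: scaleR_add_right)
qed

lemma vec_id: fixes X Y Z k :: "'b::real_vector"
  shows "(p *\<^sub>R (X - Z) + a *\<^sub>R k) - (-(r *\<^sub>R (Y - Z)) - d *\<^sub>R k) = (p *\<^sub>R X + r *\<^sub>R Y + e *\<^sub>R k - (p + r) *\<^sub>R Z) + (a + d - e) *\<^sub>R k"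
  by (simp add: algebra_simps)

theorem proposition3p2:
  fixes F :: "'a::real_normed_vector \<Rightarrow> 'b::topological_real_vector"
    and K :: "'b set" and \<alpha> :: "real \<Rightarrow> real" and A :: "'a set"
    and k0 :: 'b and C :: real and x0 h :: 'a and \<delta>0 :: real
  assumes K_closed: "closed K" and K_convex: "convex K" and K_cone: "cone K"
    and K_pointed: "pointed_cone K"
    and \<alpha>_nonneg: "\<forall>t\<ge>0. \<alpha> t \<ge> 0"
    and \<alpha>_mono: "mono_on {0..} \<alpha>"
    and \<alpha>_lim: "((\<lambda>t. \<alpha> t / t) \<longlongrightarrow> 0) (at_right 0)"
    and A_convex: "convex A"
    and k0: "k0 \<in> K - {0}"
    and C: "C \<ge> 0"
    and para: "strongly_paraconvex F K \<alpha> k0 C A"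
    and x0: "x0 \<in> A" and h: "norm h = 1"
    and \<delta>0: "\<delta>0 > 0" and line: "\<forall>t. -\<delta>0 < t \<and> t < \<delta>0 \<longrightarrow> x0 + t *\<^sub>R h \<in> A"
  shows "\<exists>b \<delta>. \<delta> > 0 \<and> \<delta> \<le> \<delta>0 \<and>
           (\<forall>t. 0 < t \<and> t < \<delta> \<longrightarrow>
              ((1 / t) *\<^sub>R (F (x0 + t *\<^sub>R h) - F x0) + (C * (\<alpha> t / t)) *\<^sub>R k0) - b \<in> K)"
proof -
  define s where "s = \<delta>0 / 2"
  have s: "s > 0" "s < \<delta>0" using \<delta>0 by (auto simp: s_def)
  define F2 where "F2 = F (x0 + (-s) *\<^sub>R h)"
  define b where "b = - ((1/s) *\<^sub>R (F2 - F x0)) - (C * \<alpha> (2 * s) / s) *\<^sub>R k0"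
  have sc: "c *\<^sub>R x \<in> K" if "x \<in> K" "c \<ge> 0" for c x using K_cone that unfolding cone_def by auto
  have k0K: "k0 \<in> K" using k0 by auto
  show ?thesis
  proof (intro exI conjI allI impI)
    show "s > 0" "s \<le> \<delta>0" using s by auto
    fix t assume t: "0 < t \<and> t < s"
    define F1 where "F1 = F (x0 + t *\<^sub>R h)"
    define l where "l = s / (s + t)"
    have l: "l \<in> {0..1}" using s t by (auto simp: l_def)
    have x1: "x0 + t *\<^sub>R h \<in> A" using line t s by auto
    have x2: "x0 + (-s) *\<^sub>R h \<in> A"
    proof -
      have "-\<delta>0 < -s \<and> -s < \<delta>0" using s by linarith
      thus ?thesis using line by blast
    qed
    have comb: "l *\<^sub>R (x0 + t *\<^sub>R h) + (1 - l) *\<^sub>R (x0 + (-s) *\<^sub>R h) = x0"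
    proof -
      have "l * t - (1 - l) * s = 0" using s t by (simp add: l_def field_simps)
      have "l *\<^sub>R (x0 + t *\<^sub>R h) + (1 - l) *\<^sub>R (x0 + (-s) *\<^sub>R h) = x0 + (l * t - (1 - l) * s) *\<^sub>R h"
        by (simp add: algebra_simps)
      thus ?thesis using \<open>l * t - (1 - l) * s = 0\<close> by simp
    qed
    have nrm: "norm ((x0 + t *\<^sub>R h) - (x0 + (-s) *\<^sub>R h)) = t + s"
    proof -
      have "(x0 + t *\<^sub>R h) - (x0 + (-s) *\<^sub>R h) = (t + s) *\<^sub>R h" by (simp add: algebra_simps)
      thus ?thesis using h s t by simp
    qed
    define m where "m = C * min l (1 - l) * \<alpha> (t + s)"
    have v: "l *\<^sub>R F1 + (1 - l) *\<^sub>R F2 + m *\<^sub>R k0 - F x0 \<in> K"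
      using para x1 x2 l comb nrm unfolding strongly_paraconvex_def cone_le_def F1_def F2_def m_def
      by metis
    define q where "q = (s + t) / (s * t)"
    have q: "q \<ge> 0" using s t by (simp add: q_def)
    have w: "q *\<^sub>R (l *\<^sub>R F1 + (1 - l) *\<^sub>R F2 + m *\<^sub>R k0 - F x0) \<in> K" using sc[OF v q] .
    have pos: "s * t > 0" "s + t > 0" using s t by auto
    have nz: "s \<noteq> 0" "t \<noteq> 0" "s + t \<noteq> 0" using s t by auto
    have e: "1 - l = t / (s + t)"
      proof -
        have "1 - l = (s + t) / (s + t) - s / (s + t)" using nz(3) by (simp add: l_def)
        also have "\<dots> = ((s + t) - s) / (s + t)" by (rule diff_divide_distrib[symmetric])
        finally show ?thesis by simp
      qed
    have ql: "q * l = 1 / t" "q * (1 - l) = 1 / s"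
    proof -
      have "q * l = ((s + t) * s) / ((s + t) * (s * t))" by (simp add: q_def l_def)
      also have "\<dots> = s / (s * t)" by (rule mult_divide_mult_cancel_left[OF nz(3)])
      also have "\<dots> = 1/t" using nz by simp
      finally show "q * l = 1 / t" .
      have "q * (1 - l) = ((s + t) * t) / ((s + t) * (s * t))" by (simp add: q_def e)
      also have "\<dots> = t / (s * t)" by (rule mult_divide_mult_cancel_left[OF nz(3)])
      also have "\<dots> = 1/s" using nz by simp
      finally show "q * (1 - l) = 1 / s" .
    qed
    have q1: "q = 1/t + 1/s"
    proof -
      have "q = s / (s * t) + t / (s * t)" unfolding q_def by (rule add_divide_distrib)
      thus ?thesis using nz by simp
    qed
    define c where "c = C * (\<alpha> t / t) + C * \<alpha> (2 * s) / s - q * m"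
    have eq: "((1 / t) *\<^sub>R (F1 - F x0) + (C * (\<alpha> t / t)) *\<^sub>R k0) - b
       = q *\<^sub>R (l *\<^sub>R F1 + (1 - l) *\<^sub>R F2 + m *\<^sub>R k0 - F x0) + c *\<^sub>R k0"
    proof -
      have "q *\<^sub>R (l *\<^sub>R F1 + (1 - l) *\<^sub>R F2 + m *\<^sub>R k0 - F x0)
          = (q*l) *\<^sub>R F1 + (q * (1 - l)) *\<^sub>R F2 + (q*m) *\<^sub>R k0 - q *\<^sub>R F x0"
        by (simp add: algebra_simps)
      also have "\<dots> = (1/t) *\<^sub>R F1 + (1/s) *\<^sub>R F2 + (q*m) *\<^sub>R k0 - (1/t + 1/s) *\<^sub>R F x0"
        unfolding ql by (simp only: q1)
      finally show ?thesis unfolding b_def c_def by (simp only: vec_id)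
    qed
    have cnn: "c \<ge> 0"
    proof -
      have a1: "\<alpha> t \<ge> 0" using \<alpha>_nonneg t by auto
      have a2: "\<alpha> (t + s) \<le> \<alpha> (2 * s)" 
      proof -
        have "t + s \<in> {0..}" "2 * s \<in> {0..}" "t + s \<le> 2 * s" using t s by auto
        thus ?thesis using mono_onD[OF \<alpha>_mono] by blast
      qed
      have a3: "\<alpha> (t + s) \<ge> 0" using \<alpha>_nonneg t s by auto
      have mn: "min l (1 - l) \<le> t / (s + t)" using e by simp
      have "q * m \<le> q * (C * (t / (s + t)) * \<alpha> (t + s))"
        unfolding m_def using q C a3 mn by (intro mult_left_mono mult_right_mono) auto
      also have "\<dots> = C * \<alpha> (t + s) * (q * (1 - l))" by (simp add: e)
      also have "\<dots> = C * \<alpha> (t + s) / s" using ql(2) by simp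
      also have "\<dots> \<le> C * \<alpha> (2 * s) / s" using C a2 s by (simp add: divide_right_mono mult_left_mono)
      finally have "q * m \<le> C * \<alpha> (2 * s) / s" .
      moreover have "C * (\<alpha> t / t) \<ge> 0" using C a1 t by simp
      ultimately show ?thesis unfolding c_def by linarith
    qed
    show "((1 / t) *\<^sub>R (F (x0 + t *\<^sub>R h) - F x0) + (C * (\<alpha> t / t)) *\<^sub>R k0) - b \<in> K"
      using eq cone_add[OF K_convex K_cone w sc[OF k0K cnn]] unfolding F1_def by simp
  qed
qed

end
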